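(* Let $k$ be a non-archimedean local field of residue characteristic $2$. Let $B(x)=a(x_1^2-\Delta x_2^2)$ on $k^2$, where $|\Delta|=|\varpi|$ and $a$ is a unit of $\mathfrak o$ with quadratic defect $4\mathfrak o$. Let $z=q^{-\beta}$, $w=zq^{-1}$, and $t\in\mathfrak o\setminus\{0\}$ with $|t|=q^{-T}$. Then \[ X^B(\beta;t^2)=|2|\,\frac{1-w^{2T+e+1}}{1-w}. \]
   Context: $k$ has ring of integers $\mathfrak o$, uniformizer $\varpi$, residue field of cardinality $q$, absolute value normalized by $|\varpi|=q^{-1}$, and $e=\operatorname{ord}(2)$ is the ramification index. On $\mathfrak o^n$ use the additive Haar measure of total mass $1$. For a quadratic form $B$ on $k^n$, $\rho\in\mathfrak o$ and integer $\ell\ge0$: $X_\ell^B(\rho)=\operatorname{meas}\{x\in\mathfrak o^n: B(x)-\rho\in 2\varpi^\ell\mathfrak o\}$ and $X^B(\beta;\rho)=\sum_{\ell\ge0}z^\ell X_\ell^B(\rho)$ with $z=q^{-\beta}$. The quadratic defect of $\rho\in k$ is the intersection of all ideals $b\mathfrak o$ over those $b\in k$ for which $\rho-b$ is a square in $k$. *)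

theory Defs
  imports "HOL-Analysis.Analysis" "HOL-Probability.Probability"
begin

text \<open>A discrete valuation v on a field k (value at 0 irrelevant; 0 has valuation +infinity
by convention, handled explicitly below), normalized so that it is surjective onto the integers.\<close>

definition discrete_val :: "('k::field \<Rightarrow> int) \<Rightarrow> bool" where
  "discrete_val v \<longleftrightarrow>
     (\<forall>x y. x \<noteq> 0 \<and> y \<noteq> 0 \<longrightarrow> v (x * y) = v x + v y) \<and>
     (\<forall>x y. x \<noteq> 0 \<and> y \<noteq> 0 \<and> x + y \<noteq> 0 \<longrightarrow> min (v x) (v y) \<le> v (x + y)) \<and>
     (\<exists>p. p \<noteq> 0 \<and> v p = 1)"

definition vball :: "('k::field \<Rightarrow> int) \<Rightarrow> int \<Rightarrow> 'k set" where
  "vball v n = {x. x = 0 \<or> n \<le> v x}"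

abbreviation intring :: "('k::field \<Rightarrow> int) \<Rightarrow> 'k set" where
  "intring v \<equiv> vball v 0"

definition residue_field :: "('k::field \<Rightarrow> int) \<Rightarrow> 'k set set" where
  "residue_field v = intring v // {(x, y). x \<in> intring v \<and> y \<in> intring v \<and> x - y \<in> vball v 1}"

definition resq :: "('k::field \<Rightarrow> int) \<Rightarrow> nat" where
  "resq v = card (residue_field v)"

definition val_complete :: "('k::field \<Rightarrow> int) \<Rightarrow> bool" where
  "val_complete v \<longleftrightarrow>
     (\<forall>s :: nat \<Rightarrow> 'k. (\<forall>n. \<exists>N. \<forall>i\<ge>N. \<forall>j\<ge>N. s i - s j \<in> vball v n) \<longrightarrow>
        (\<exists>L. \<forall>n. \<exists>N. \<forall>i\<ge>N. s i - L \<in> vball v n))"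

definition nonarch_local_field :: "('k::field \<Rightarrow> int) \<Rightarrow> bool" where
  "nonarch_local_field v \<longleftrightarrow> discrete_val v \<and> val_complete v \<and> finite (residue_field v)"

definition vabs :: "('k::field \<Rightarrow> int) \<Rightarrow> 'k \<Rightarrow> real" where
  "vabs v x = (if x = 0 then 0 else real (resq v) powr (- real_of_int (v x)))"

definition principal_o :: "('k::field \<Rightarrow> int) \<Rightarrow> 'k \<Rightarrow> 'k set" where
  "principal_o v b = {b * x | x. x \<in> intring v}"

definition quad_defect :: "('k::field \<Rightarrow> int) \<Rightarrow> 'k \<Rightarrow> 'k set" where
  "quad_defect v \<rho> = \<Inter> {principal_o v b | b. \<exists>y. \<rho> - b = y ^ 2}"

definition open_o2 :: "('k::field \<Rightarrow> int) \<Rightarrow> ('k \<times> 'k) set \<Rightarrow> bool" where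
  "open_o2 v U \<longleftrightarrow> U \<subseteq> intring v \<times> intring v \<and>
     (\<forall>(x1, x2) \<in> U. \<exists>m::nat. \<forall>y1 y2. y1 \<in> intring v \<and> y2 \<in> intring v \<and>
         y1 - x1 \<in> vball v m \<and> y2 - x2 \<in> vball v m \<longrightarrow> (y1, y2) \<in> U)"

definition haar_o2 :: "('k::field \<Rightarrow> int) \<Rightarrow> ('k \<times> 'k) measure \<Rightarrow> bool" where
  "haar_o2 v M \<longleftrightarrow>
     space M = intring v \<times> intring v \<and>
     sets M = sigma_sets (intring v \<times> intring v) {U. open_o2 v U} \<and>
     emeasure M (intring v \<times> intring v) = 1 \<and>
     (\<forall>A \<in> sets M. \<forall>c1 \<in> intring v. \<forall>c2 \<in> intring v.
        emeasure M ((\<lambda>(x1, x2). (x1 + c1, x2 + c2)) ` A) = emeasure M A)"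

definition Xl :: "('k::field \<Rightarrow> int) \<Rightarrow> ('k \<times> 'k) measure \<Rightarrow> 'k \<Rightarrow> ('k \<times> 'k \<Rightarrow> 'k) \<Rightarrow> 'k \<Rightarrow> nat \<Rightarrow> real" where
  "Xl v M p B \<rho> l = measure M {x \<in> intring v \<times> intring v. B x - \<rho> \<in> principal_o v (2 * p ^ l)}"

definition Xser :: "('k::field \<Rightarrow> int) \<Rightarrow> ('k \<times> 'k) measure \<Rightarrow> 'k \<Rightarrow> ('k \<times> 'k \<Rightarrow> 'k) \<Rightarrow> complex \<Rightarrow> 'k \<Rightarrow> complex" where
  "Xser v M p B \<beta> \<rho> = (\<Sum>l. (of_nat (resq v) powr (- \<beta>)) ^ l * complex_of_real (Xl v M p B \<rho> l))"

end

theory Submission imports Defs begin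

lemma dv_mult: "discrete_val v \<Longrightarrow> x \<noteq> 0 \<Longrightarrow> y \<noteq> 0 \<Longrightarrow> v (x * y) = v x + v y"
  unfolding discrete_val_def by blast

lemma dv_ultra: "discrete_val v \<Longrightarrow> x \<noteq> 0 \<Longrightarrow> y \<noteq> 0 \<Longrightarrow> x + y \<noteq> 0 \<Longrightarrow> min (v x) (v y) \<le> v (x + y)"
  unfolding discrete_val_def by blast

lemma dv_one: assumes "discrete_val v" shows "v 1 = 0"
  using dv_mult[OF assms, of 1 1] by simp

lemma dv_inverse: assumes "discrete_val v" "x \<noteq> 0" shows "v (inverse x) = - v x"
  using dv_mult[OF assms(1), of x "inverse x"] assms dv_one[OF assms(1)] by simp

lemma dv_divide: assumes "discrete_val v" "x \<noteq> 0" "y \<noteq> 0" shows "v (x / y) = v x - v y"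
  using dv_mult[OF assms(1), of x "inverse y"] assms dv_inverse[OF assms(1) assms(3)]
  by (simp add: divide_inverse)

lemma dv_power: assumes "discrete_val v" "x \<noteq> 0" shows "v (x ^ n) = int n * v x"
  by (induction n) (auto simp: dv_one[OF assms(1)] dv_mult[OF assms(1)] assms(2) algebra_simps)

lemma dv_m1: assumes "discrete_val v" shows "v (-1) = 0"
  using dv_mult[OF assms, of "-1" "-1"] dv_one[OF assms] by simp

lemma dv_uminus: assumes "discrete_val v" "x \<noteq> 0" shows "v (- x) = v x"
  using dv_mult[OF assms(1), of "-1" x] dv_m1[OF assms(1)] assms by simp

lemma vball_iff: "x \<noteq> 0 \<Longrightarrow> x \<in> vball v n \<longleftrightarrow> n \<le> v x"
  by (simp add: vball_def)

lemma vball_0[simp]: "0 \<in> vball v n"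
  by (simp add: vball_def)

lemma vball_mono: "m \<le> n \<Longrightarrow> x \<in> vball v n \<Longrightarrow> x \<in> vball v m"
  by (auto simp: vball_def)

lemma vball_uminus: assumes "discrete_val v" "x \<in> vball v n" shows "- x \<in> vball v n"
  using assms dv_uminus[OF assms(1), of x] by (cases "x = 0") (auto simp: vball_def)

lemma vball_add: assumes "discrete_val v" "x \<in> vball v n" "y \<in> vball v n" shows "x + y \<in> vball v n"
proof (cases "x = 0 \<or> y = 0 \<or> x + y = 0")
  case True then show ?thesis using assms by auto
next
  case False then show ?thesis using assms dv_ultra[OF assms(1), of x y] by (auto simp: vball_def)
qed

lemma vball_diff: assumes "discrete_val v" "x \<in> vball v n" "y \<in> vball v n" shows "x - y \<in> vball v n"
  using vball_add[OF assms(1) assms(2) vball_uminus[OF assms(1) assms(3)]] by simp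

lemma vball_mult: assumes "discrete_val v" "x \<in> vball v m" "y \<in> vball v n" shows "x * y \<in> vball v (m + n)"
  using assms dv_mult[OF assms(1), of x y] by (cases "x = 0 \<or> y = 0") (auto simp: vball_def)

lemma vball_mult_iff: assumes "discrete_val v" "y \<noteq> 0" shows "x * y \<in> vball v n \<longleftrightarrow> x \<in> vball v (n - v y)"
  using assms dv_mult[OF assms(1), of x y] by (cases "x = 0") (auto simp: vball_def)

lemma dv_strict: assumes "discrete_val v" "x \<noteq> 0" "y \<noteq> 0" "v x < v y"
  shows "x + y \<noteq> 0 \<and> v (x + y) = v x"
proof -
  have ne: "x + y \<noteq> 0"
  proof
    assume "x + y = 0" then have "y = - x" by (metis add.commute add_eq_0_iff2)
    then show False using assms dv_uminus[OF assms(1) assms(2)] by simp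
  qed
  have "min (v x) (v y) \<le> v (x + y)" using dv_ultra[OF assms(1) assms(2,3) ne] .
  then have 1: "v x \<le> v (x + y)" using assms by simp
  have "min (v (x+y)) (v (-y)) \<le> v ((x + y) + (-y))"
    using dv_ultra[OF assms(1) ne, of "-y"] assms by simp
  then have "min (v (x+y)) (v y) \<le> v x" using dv_uminus[OF assms(1) assms(3)] by simp
  then have "v (x + y) \<le> v x" using assms by linarith
  with 1 ne show ?thesis by simp
qed

definition cyl :: "('k::field \<Rightarrow> int) \<Rightarrow> 'k \<Rightarrow> 'k \<Rightarrow> nat \<Rightarrow> nat \<Rightarrow> ('k \<times> 'k) set" where
  "cyl v c1 c2 i j = {(x1, x2). x1 \<in> intring v \<and> x2 \<in> intring v \<and> x1 - c1 \<in> vball v (int i) \<and> x2 - c2 \<in> vball v (int j)}"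

definition reps :: "('k::field \<Rightarrow> int) \<Rightarrow> 'k set" where
  "reps v = (\<lambda>C. SOME x. x \<in> C) ` residue_field v"

definition rrel :: "('k::field \<Rightarrow> int) \<Rightarrow> ('k \<times> 'k) set" where
  "rrel v = {(x, y). x \<in> intring v \<and> y \<in> intring v \<and> x - y \<in> vball v 1}"

context
  fixes v :: "'k::field \<Rightarrow> int" and M :: "('k \<times> 'k) measure"
  assumes dv: "discrete_val v" and haar: "haar_o2 v M"
begin

lemma equiv_rrel: "equiv (intring v) (rrel v)"
proof (rule equivI)
  show "rrel v \<subseteq> intring v \<times> intring v" by (auto simp: rrel_def)
  show "refl_on (intring v) (rrel v)" by (auto simp: refl_on_def rrel_def)
  show "sym (rrel v)" unfolding sym_def rrel_def
    using vball_uminus[OF dv] by (metis (mono_tags, lifting) case_prodD case_prodI mem_Collect_eq minus_diff_eq)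
  show "trans (rrel v)"
  proof (rule transI)
    fix x y z assume "(x,y) \<in> rrel v" "(y,z) \<in> rrel v"
    then show "(x,z) \<in> rrel v" using vball_add[OF dv, of "x-y" 1 "y-z"] by (auto simp: rrel_def)
  qed
qed

lemma residue_field_eq: "residue_field v = intring v // rrel v"
  by (simp add: residue_field_def rrel_def)

lemma rep_mem: assumes "C \<in> residue_field v" shows "(SOME x. x \<in> C) \<in> C"
proof -
  from assms obtain x where "x \<in> intring v" "C = rrel v `` {x}"
    unfolding residue_field_eq by (auto elim: quotientE)
  then have "x \<in> C" using equiv_class_self[OF equiv_rrel] by simp
  then show ?thesis by (rule someI)
qed

lemma reps_sub: "reps v \<subseteq> intring v"
proof
  fix s assume "s \<in> reps v"
  then obtain C where C: "C \<in> residue_field v" "s = (SOME x. x \<in> C)" by (auto simp: reps_def)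
  then have "s \<in> C" using rep_mem by simp
  then show "s \<in> intring v" using C(1) unfolding residue_field_eq
    using Union_quotient[OF equiv_rrel] by blast
qed

lemma reps_exists: assumes "y \<in> intring v" shows "\<exists>s \<in> reps v. y - s \<in> vball v 1"
proof -
  let ?C = "rrel v `` {y}"
  have C: "?C \<in> residue_field v" using assms by (simp add: residue_field_eq quotientI)
  define s where "s = (SOME x. x \<in> ?C)"
  have "s \<in> ?C" unfolding s_def using C by (rule rep_mem)
  then have "(y, s) \<in> rrel v" by simp
  then have "y - s \<in> vball v 1" by (simp add: rrel_def)
  moreover have "s \<in> reps v" unfolding reps_def s_def by (rule imageI[OF C])
  ultimately show ?thesis by blast
qed

lemma reps_unique: assumes "s \<in> reps v" "s' \<in> reps v" "s - s' \<in> vball v 1" shows "s = s'"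
proof -
  obtain C where C: "C \<in> residue_field v" "s = (SOME x. x \<in> C)" using assms(1) by (auto simp: reps_def)
  obtain C' where C': "C' \<in> residue_field v" "s' = (SOME x. x \<in> C')" using assms(2) by (auto simp: reps_def)
  have "s \<in> C" "s' \<in> C'" using C C' rep_mem by auto
  moreover have "(s, s') \<in> rrel v" using assms reps_sub by (auto simp: rrel_def)
  ultimately have "C = C'" using quotient_eq_iff[OF equiv_rrel, of C C' s s'] C(1) C'(1)
    by (simp add: residue_field_eq)
  then show ?thesis using C C' by simp
qed

lemma reps_card: "card (reps v) = resq v"
proof -
  have "inj_on (\<lambda>C. SOME x. x \<in> C) (residue_field v)"
  proof (rule inj_onI)
    fix C C' assume CC: "C \<in> residue_field v" "C' \<in> residue_field v" "(SOME x. x \<in> C) = (SOME x. x \<in> C')"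
    then have "(SOME x. x \<in> C) \<in> C" "(SOME x. x \<in> C) \<in> C'" using rep_mem by metis+
    then show "C = C'" using CC(1,2) unfolding residue_field_eq
      using quotient_disj[OF equiv_rrel] by blast
  qed
  then show ?thesis by (simp add: reps_def resq_def card_image)
qed

lemma finite_M: "finite_measure M"
  using haar by (intro finite_measureI) (simp add: haar_o2_def)

lemma cyl_sets: "cyl v c1 c2 i j \<in> sets M"
proof -
  have "open_o2 v (cyl v c1 c2 i j)"
    unfolding open_o2_def
  proof (intro conjI ballI)
    show "cyl v c1 c2 i j \<subseteq> intring v \<times> intring v" by (auto simp: cyl_def)
  next
    fix z assume z: "z \<in> cyl v c1 c2 i j"
    obtain x1 x2 where zz: "z = (x1, x2)" by (cases z)
    show "case z of (x1, x2) \<Rightarrow> \<exists>m::nat. \<forall>y1 y2. y1 \<in> intring v \<and> y2 \<in> intring v \<and>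
         y1 - x1 \<in> vball v m \<and> y2 - x2 \<in> vball v m \<longrightarrow> (y1, y2) \<in> cyl v c1 c2 i j"
      unfolding zz case_prod_conv
    proof (intro exI[of _ "max i j"] allI impI)
      fix y1 y2 assume y: "y1 \<in> intring v \<and> y2 \<in> intring v \<and> y1 - x1 \<in> vball v (int (max i j)) \<and> y2 - x2 \<in> vball v (int (max i j))"
      have "y1 - x1 \<in> vball v i" "y2 - x2 \<in> vball v j" using y vball_mono[of "int i" "int (max i j)"] vball_mono[of "int j" "int (max i j)"] by auto
      moreover have "x1 - c1 \<in> vball v i" "x2 - c2 \<in> vball v j" using z zz by (auto simp: cyl_def)
      ultimately have "(y1 - x1) + (x1 - c1) \<in> vball v i" "(y2 - x2) + (x2 - c2) \<in> vball v j"
        using vball_add[OF dv] by blast+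
      then show "(y1, y2) \<in> cyl v c1 c2 i j" using y by (simp add: cyl_def)
    qed
  qed
  then show ?thesis using haar unfolding haar_o2_def by (auto intro: sigma_sets.Basic)
qed

lemma cyl_translate: assumes "d1 \<in> intring v" "d2 \<in> intring v"
  shows "(\<lambda>(x1, x2). (x1 + d1, x2 + d2)) ` cyl v c1 c2 i j = cyl v (c1 + d1) (c2 + d2) i j"
proof (intro equalityI subsetI)
  fix z assume "z \<in> (\<lambda>(x1, x2). (x1 + d1, x2 + d2)) ` cyl v c1 c2 i j"
  then obtain x1 x2 where x: "(x1, x2) \<in> cyl v c1 c2 i j" "z = (x1 + d1, x2 + d2)" by auto
  then show "z \<in> cyl v (c1 + d1) (c2 + d2) i j" using assms vball_add[OF dv, of _ 0]
    by (auto simp: cyl_def algebra_simps)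
next
  fix z assume z: "z \<in> cyl v (c1 + d1) (c2 + d2) i j"
  obtain y1 y2 where zz: "z = (y1, y2)" by (cases z)
  have "(y1 - d1, y2 - d2) \<in> cyl v c1 c2 i j" using z zz assms vball_diff[OF dv, of _ 0]
    by (auto simp: cyl_def algebra_simps)
  moreover have "z = (\<lambda>(x1, x2). (x1 + d1, x2 + d2)) (y1 - d1, y2 - d2)" using zz by simp
  ultimately show "z \<in> (\<lambda>(x1, x2). (x1 + d1, x2 + d2)) ` cyl v c1 c2 i j" by blast
qed

lemma cyl_shift: assumes "c1 \<in> intring v" "c2 \<in> intring v"
  shows "measure M (cyl v c1 c2 i j) = measure M (cyl v 0 0 i j)"
proof -
  have "emeasure M ((\<lambda>(x1, x2). (x1 + c1, x2 + c2)) ` cyl v 0 0 i j) = emeasure M (cyl v 0 0 i j)"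
    using haar cyl_sets assms unfolding haar_o2_def by blast
  then show ?thesis using cyl_translate[OF assms, of 0 0 i j] by (simp add: measure_def)
qed

end


context
  fixes v :: "'k::field \<Rightarrow> int" and M :: "('k \<times> 'k) measure" and p :: 'k
  assumes dv: "discrete_val v" and haar: "haar_o2 v M" and pnz: "p \<noteq> 0" and vp: "v p = 1"
    and fin: "finite (residue_field v)"
begin

lemma vpow: "v (p ^ i) = int i"
  using dv_power[OF dv pnz] vp by simp

lemma pow_ball: "p ^ i \<in> vball v (int i)"
  using vpow by (simp add: vball_def)

lemma reps_fin: "finite (reps v)"
  using fin by (simp add: reps_def)

lemma mult_ball_o: "s \<in> intring v \<Longrightarrow> p ^ i * s \<in> intring v \<and> p ^ i * s \<in> vball v (int i)"
  using vball_mult[OF dv pow_ball, of s 0 i] vball_mono[of 0 "int i"] by auto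

lemma split_elem: assumes "x \<in> vball v (int i)"
  shows "\<exists>s\<in>reps v. x - p ^ i * s \<in> vball v (int (Suc i))"
proof -
  define y where "y = x / p ^ i"
  have pi: "p ^ i \<noteq> 0" using pnz by simp
  have xy: "x = p ^ i * y" using pi by (simp add: y_def)
  have "y \<in> intring v"
  proof (cases "x = 0")
    case True then show ?thesis by (simp add: y_def)
  next
    case False
    then have "v y = v x - int i" using dv_divide[OF dv False pi] vpow by (simp add: y_def)
    then show ?thesis using assms False by (simp add: vball_def)
  qed
  then obtain s where s: "s \<in> reps v" "y - s \<in> vball v 1" using reps_exists[OF dv haar] by blast
  have "p ^ i * (y - s) \<in> vball v (int i + 1)" using vball_mult[OF dv pow_ball s(2)] .
  then have "x - p ^ i * s \<in> vball v (int (Suc i))" by (simp add: xy algebra_simps)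
  then show ?thesis using s by blast
qed

lemma split_uniq: assumes "s \<in> reps v" "s' \<in> reps v" "x - p ^ i * s \<in> vball v (int (Suc i))"
   "x - p ^ i * s' \<in> vball v (int (Suc i))" shows "s = s'"
proof -
  have "(x - p ^ i * s') - (x - p ^ i * s) \<in> vball v (int (Suc i))" using vball_diff[OF dv assms(4,3)] .
  then have "(s - s') * p ^ i \<in> vball v (int (Suc i))" by (simp add: algebra_simps)
  then have "s - s' \<in> vball v 1" using vball_mult_iff[OF dv, of "p^i" "s - s'"] pnz vpow by simp
  then show ?thesis using reps_unique[OF dv haar assms(1,2)] by simp
qed

lemma step1: "measure M (cyl v 0 0 i j) = real (resq v) * measure M (cyl v 0 0 (Suc i) j)"
proof -
  let ?A = "\<lambda>s. cyl v (p ^ i * s) 0 (Suc i) j"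
  have eq: "cyl v 0 0 i j = (\<Union>s\<in>reps v. ?A s)"
  proof (intro equalityI subsetI)
    fix z assume z: "z \<in> cyl v 0 0 i j"
    obtain x1 x2 where zz: "z = (x1, x2)" by (cases z)
    have x: "x1 \<in> intring v" "x2 \<in> intring v" "x1 \<in> vball v (int i)" "x2 \<in> vball v (int j)"
      using z zz by (auto simp: cyl_def)
    obtain s where "s \<in> reps v" "x1 - p ^ i * s \<in> vball v (int (Suc i))" using split_elem[OF x(3)] by blast
    then show "z \<in> (\<Union>s\<in>reps v. ?A s)" using x zz by (auto simp: cyl_def)
  next
    fix z assume "z \<in> (\<Union>s\<in>reps v. ?A s)"
    then obtain s x1 x2 where sx: "s \<in> reps v" "z = (x1, x2)" "(x1, x2) \<in> ?A s" by (cases z) auto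
    then have x: "x1 \<in> intring v" "x2 \<in> intring v" "x1 - p ^ i * s \<in> vball v (int (Suc i))" "x2 \<in> vball v (int j)"
      by (auto simp: cyl_def)
    have "x1 - p ^ i * s \<in> vball v (int i)" using vball_mono[OF _ x(3), of "int i"] by simp
    moreover have "p ^ i * s \<in> vball v (int i)" using mult_ball_o sx(1) reps_sub[OF dv haar] by blast
    ultimately have "(x1 - p ^ i * s) + p ^ i * s \<in> vball v (int i)" using vball_add[OF dv] by blast
    then show "z \<in> cyl v 0 0 i j" using x sx by (simp add: cyl_def)
  qed
  have disj: "disjoint_family_on ?A (reps v)"
    unfolding disjoint_family_on_def
  proof (intro ballI impI)
    fix s s' assume "s \<in> reps v" "s' \<in> reps v" "s \<noteq> s'"
    then show "?A s \<inter> ?A s' = {}" using split_uniq by (auto simp: cyl_def)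
  qed
  have "measure M (cyl v 0 0 i j) = (\<Sum>s\<in>reps v. measure M (?A s))"
  proof -
    have img: "?A ` reps v \<subseteq> sets M" using cyl_sets[OF dv haar] by blast
    have fe: "\<And>s. s \<in> reps v \<Longrightarrow> emeasure M (?A s) \<noteq> (\<infinity>::ennreal)"
      using finite_measure.emeasure_finite[OF finite_M[OF dv haar]] unfolding infinity_ennreal_def by blast
    show ?thesis unfolding eq by (rule measure_finite_Union[OF reps_fin img disj fe])
  qed
  also have "\<dots> = (\<Sum>s\<in>reps v. measure M (cyl v 0 0 (Suc i) j))" (is "_ = (\<Sum>s\<in>_. ?B)")
  proof (rule sum.cong[OF refl])
    fix s assume "s \<in> reps v"
    then have "s \<in> intring v" using reps_sub[OF dv haar] by blast
    then have "p ^ i * s \<in> intring v" "p ^ j * s \<in> intring v" using mult_ball_o by blast+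
    then show "measure M (?A s) = ?B"
      using cyl_shift[OF dv haar, of "p ^ i * s" 0] cyl_shift[OF dv haar, of 0 "p ^ j * s"] by simp
  qed
  finally show ?thesis using reps_card[OF dv haar] by simp
qed

lemma step2: "measure M (cyl v 0 0 i j) = real (resq v) * measure M (cyl v 0 0 i (Suc j))"
proof -
  let ?A = "\<lambda>s. cyl v 0 (p ^ j * s) i (Suc j)"
  have eq: "cyl v 0 0 i j = (\<Union>s\<in>reps v. ?A s)"
  proof (intro equalityI subsetI)
    fix z assume z: "z \<in> cyl v 0 0 i j"
    obtain x1 x2 where zz: "z = (x1, x2)" by (cases z)
    have x: "x1 \<in> intring v" "x2 \<in> intring v" "x1 \<in> vball v (int i)" "x2 \<in> vball v (int j)"
      using z zz by (auto simp: cyl_def)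
    obtain s where "s \<in> reps v" "x2 - p ^ j * s \<in> vball v (int (Suc j))" using split_elem[OF x(4)] by blast
    then show "z \<in> (\<Union>s\<in>reps v. ?A s)" using x zz by (auto simp: cyl_def)
  next
    fix z assume "z \<in> (\<Union>s\<in>reps v. ?A s)"
    then obtain s x1 x2 where sx: "s \<in> reps v" "z = (x1, x2)" "(x1, x2) \<in> ?A s" by (cases z) auto
    then have x: "x1 \<in> intring v" "x2 \<in> intring v" "x2 - p ^ j * s \<in> vball v (int (Suc j))" "x1 \<in> vball v (int i)"
      by (auto simp: cyl_def)
    have "x2 - p ^ j * s \<in> vball v (int j)" using vball_mono[OF _ x(3), of "int j"] by simp
    moreover have "p ^ j * s \<in> vball v (int j)" using mult_ball_o sx(1) reps_sub[OF dv haar] by blast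
    ultimately have "(x2 - p ^ j * s) + p ^ j * s \<in> vball v (int j)" using vball_add[OF dv] by blast
    then show "z \<in> cyl v 0 0 i j" using x sx by (simp add: cyl_def)
  qed
  have disj: "disjoint_family_on ?A (reps v)"
    unfolding disjoint_family_on_def
  proof (intro ballI impI)
    fix s s' assume "s \<in> reps v" "s' \<in> reps v" "s \<noteq> s'"
    then show "?A s \<inter> ?A s' = {}" using split_uniq by (auto simp: cyl_def)
  qed
  have "measure M (cyl v 0 0 i j) = (\<Sum>s\<in>reps v. measure M (?A s))"
  proof -
    have img: "?A ` reps v \<subseteq> sets M" using cyl_sets[OF dv haar] by blast
    have fe: "\<And>s. s \<in> reps v \<Longrightarrow> emeasure M (?A s) \<noteq> (\<infinity>::ennreal)"
      using finite_measure.emeasure_finite[OF finite_M[OF dv haar]] unfolding infinity_ennreal_def by blast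
    show ?thesis unfolding eq by (rule measure_finite_Union[OF reps_fin img disj fe])
  qed
  also have "\<dots> = (\<Sum>s\<in>reps v. measure M (cyl v 0 0 i (Suc j)))" (is "_ = (\<Sum>s\<in>_. ?B)")
  proof (rule sum.cong[OF refl])
    fix s assume "s \<in> reps v"
    then have "s \<in> intring v" using reps_sub[OF dv haar] by blast
    then have "p ^ i * s \<in> intring v" "p ^ j * s \<in> intring v" using mult_ball_o by blast+
    then show "measure M (?A s) = ?B"
      using cyl_shift[OF dv haar, of "p ^ i * s" 0] cyl_shift[OF dv haar, of 0 "p ^ j * s"] by simp
  qed
  finally show ?thesis using reps_card[OF dv haar] by simp
qed

lemma cyl00: "measure M (cyl v 0 0 0 0) = 1"
proof -
  have "cyl v 0 0 0 0 = intring v \<times> intring v" by (auto simp: cyl_def)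
  then show ?thesis using haar by (simp add: haar_o2_def measure_def)
qed

lemma cyl_meas_mult: "measure M (cyl v 0 0 i j) * real (resq v) ^ (i + j) = 1"
proof (induction i)
  case 0
  show ?case
  proof (induction j)
    case 0 then show ?case using cyl00 by simp
  next
    case (Suc j) then show ?case using step2[of 0 j] by (simp add: algebra_simps)
  qed
next
  case (Suc i) then show ?case using step1[of i j] by (simp add: algebra_simps)
qed

end


lemma principal_o_eq: assumes "discrete_val v" "c \<noteq> 0" shows "principal_o v c = vball v (v c)"
proof (intro equalityI subsetI)
  fix z assume "z \<in> principal_o v c"
  then obtain x where "x \<in> intring v" "z = c * x" by (auto simp: principal_o_def)
  then show "z \<in> vball v (v c)" using vball_mult[OF assms(1), of c "v c" x 0] by (simp add: vball_def)
next
  fix z assume z: "z \<in> vball v (v c)"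
  have "z / c \<in> intring v"
  proof (cases "z = 0")
    case False then show ?thesis using z dv_divide[OF assms(1) False assms(2)] by (simp add: vball_def)
  qed simp
  moreover have "z = c * (z / c)" using assms(2) by simp
  ultimately show "z \<in> principal_o v c" unfolding principal_o_def by blast
qed

context
  fixes v :: "'k::field \<Rightarrow> int" and a \<Delta> t u :: 'k and e T :: nat
  assumes dv: "discrete_val v" and ve: "v 2 = int e" and e1: "1 \<le> e" and two: "(2::'k) \<noteq> 0"
    and anz: "a \<noteq> 0" and va: "v a = 0" and Dnz: "\<Delta> \<noteq> 0" and vD: "v \<Delta> = 1"
    and tnz: "t \<noteq> 0" and vt: "v t = int T" and unz: "u \<noteq> 0" and vu: "v u = 0"
    and au: "a * u^2 - 1 \<in> vball v (2 * int e)"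
begin

lemma v_sq: "x \<noteq> 0 \<Longrightarrow> v (x^2) = 2 * v x"
  using dv_power[OF dv, of x 2] by simp

lemma keyQ: assumes m0: "0 \<le> m" and mK: "m \<le> 2 * (int T + int e)"
  shows "2*t*u*h1 + (h1^2 - \<Delta> * h2^2) \<in> vball v m \<longleftrightarrow> h1 \<in> vball v ((m+1) div 2) \<and> h2 \<in> vball v (m div 2)"
proof -
  define K where "K = int T + int e"
  have tu: "2*t*u \<noteq> 0" using two tnz unz by simp
  have vtu: "v (2*t*u) = K" using dv_mult[OF dv, of "2*t" u] dv_mult[OF dv, of 2 t] two tnz unz ve vt vu
    by (simp add: K_def)
  have tuball: "2*t*u \<in> vball v K" using vtu by (simp add: vball_def)
  have mle: "m \<le> K + (m+1) div 2" using mK unfolding K_def by presburger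
  have mle2: "m \<le> (m+1) div 2 + (m+1) div 2" by presburger
  show ?thesis
  proof
    assume Q: "2*t*u*h1 + (h1^2 - \<Delta> * h2^2) \<in> vball v m"
    have h1c: "h1 \<in> vball v ((m+1) div 2)"
    proof (rule ccontr)
      assume nh: "h1 \<notin> vball v ((m+1) div 2)"
      then have h1nz: "h1 \<noteq> 0" and vh: "v h1 < (m+1) div 2" by (auto simp: vball_def)
      then have vh2: "2 * v h1 \<le> m - 1" by linarith
      have h1sq: "h1^2 \<noteq> 0" "v (h1^2) = 2 * v h1" using h1nz v_sq by auto
      have D: "h1^2 - \<Delta> * h2^2 \<noteq> 0 \<and> v (h1^2 - \<Delta> * h2^2) \<le> 2 * v h1"
      proof (cases "h2 = 0")
        case True then show ?thesis using h1sq by simp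
      next
        case False
        have nz0: "\<Delta> * h2^2 \<noteq> 0" using False Dnz by simp
        have nz: "- (\<Delta> * h2^2) \<noteq> 0" using False Dnz by simp
        have vn: "v (- (\<Delta> * h2^2)) = 1 + 2 * v h2"
          using dv_uminus[OF dv nz0] dv_mult[OF dv Dnz, of "h2^2"] False v_sq vD by simp
        show ?thesis
        proof (cases "2 * v h1 < 1 + 2 * v h2")
          case True
          then show ?thesis using dv_strict[OF dv h1sq(1) nz] h1sq vn by simp
        next
          case False
          then have "1 + 2 * v h2 < 2 * v h1" by presburger
          then have "- (\<Delta> * h2^2) + h1^2 \<noteq> 0 \<and> v (- (\<Delta> * h2^2) + h1^2) = 1 + 2 * v h2"
            using dv_strict[OF dv nz h1sq(1)] h1sq vn by simp
          then show ?thesis using \<open>1 + 2 * v h2 < 2 * v h1\<close> by (simp add: algebra_simps)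
        qed
      qed
      have Enz: "2*t*u*h1 \<noteq> 0" using tu h1nz by simp
      have vE: "v (2*t*u*h1) = K + v h1" using dv_mult[OF dv tu h1nz] vtu by simp
      have "v h1 < K" using vh2 mK by (simp add: K_def)
      then have lt: "v (h1^2 - \<Delta> * h2^2) < v (2*t*u*h1)" using D vE by simp
      have "h1^2 - \<Delta> * h2^2 + 2*t*u*h1 \<noteq> 0 \<and> v (h1^2 - \<Delta> * h2^2 + 2*t*u*h1) = v (h1^2 - \<Delta> * h2^2)"
        using dv_strict[OF dv _ Enz lt] D by simp
      then have "2*t*u*h1 + (h1^2 - \<Delta> * h2^2) \<notin> vball v m" using D vh2
        by (simp add: vball_def algebra_simps)
      then show False using Q by simp
    qed
    have E: "2*t*u*h1 \<in> vball v m"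
      using vball_mono[OF mle vball_mult[OF dv tuball h1c]] .
    have S: "h1^2 \<in> vball v m"
      using vball_mono[OF mle2 vball_mult[OF dv h1c h1c]] by (simp add: power2_eq_square)
    have "(2*t*u*h1 + h1^2) - (2*t*u*h1 + (h1^2 - \<Delta> * h2^2)) \<in> vball v m"
      using vball_diff[OF dv vball_add[OF dv E S] Q] .
    then have DD: "\<Delta> * h2^2 \<in> vball v m" by simp
    have "h2 \<in> vball v (m div 2)"
    proof (cases "h2 = 0")
      case False
      then have "v (\<Delta> * h2^2) = 1 + 2 * v h2" using dv_mult[OF dv Dnz, of "h2^2"] v_sq vD by simp
      then have "m \<le> 1 + 2 * v h2" using DD False Dnz by (simp add: vball_def)
      then show ?thesis using False by (simp add: vball_def)
    qed simp
    then show "h1 \<in> vball v ((m+1) div 2) \<and> h2 \<in> vball v (m div 2)" using h1c by simp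
  next
    assume H: "h1 \<in> vball v ((m+1) div 2) \<and> h2 \<in> vball v (m div 2)"
    have h1c: "h1 \<in> vball v ((m+1) div 2)" using H by simp
    have E: "2*t*u*h1 \<in> vball v m"
      using vball_mono[OF mle vball_mult[OF dv tuball h1c]] .
    have S: "h1^2 \<in> vball v m"
      using vball_mono[OF mle2 vball_mult[OF dv h1c h1c]] by (simp add: power2_eq_square)
    have DB: "\<Delta> \<in> vball v 1" using vD by (simp add: vball_def)
    have "\<Delta> * (h2 * h2) \<in> vball v (1 + (m div 2 + m div 2))"
      using vball_mult[OF dv DB vball_mult[OF dv, of h2 "m div 2" h2 "m div 2"]] H by simp
    moreover have "m \<le> 1 + (m div 2 + m div 2)" by presburger
    ultimately have DD: "\<Delta> * h2^2 \<in> vball v m" using vball_mono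
      by (metis power2_eq_square)
    show "2*t*u*h1 + (h1^2 - \<Delta> * h2^2) \<in> vball v m"
      using vball_add[OF dv E vball_diff[OF dv S DD]] .
  qed
qed

lemma keyR: assumes m0: "0 \<le> m" and mK: "m \<le> 2 * (int T + int e)"
  shows "a * (x1^2 - \<Delta> * x2^2) - t^2 \<in> vball v m \<longleftrightarrow> x1 - t*u \<in> vball v ((m+1) div 2) \<and> x2 \<in> vball v (m div 2)"
proof -
  define h1 where "h1 = x1 - t*u"
  define Q where "Q = 2*t*u*h1 + (h1^2 - \<Delta> * x2^2)"
  define P where "P = t^2 * (a*u^2 - 1)"
  have id: "a * (x1^2 - \<Delta> * x2^2) - t^2 = P + a * Q"
    unfolding P_def Q_def h1_def by (simp add: algebra_simps power2_eq_square)
  have tb: "t^2 \<in> vball v (2 * int T)" using v_sq[OF tnz] vt by (simp add: vball_def)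
  have "P \<in> vball v (2 * int T + 2 * int e)" unfolding P_def using vball_mult[OF dv tb au] .
  then have Pm: "P \<in> vball v m" using vball_mono[of m] mK by simp
  have aQ: "a * Q \<in> vball v m \<longleftrightarrow> Q \<in> vball v m"
    using vball_mult_iff[OF dv anz, of Q m] va by (simp add: mult.commute)
  have "a * (x1^2 - \<Delta> * x2^2) - t^2 \<in> vball v m \<longleftrightarrow> a * Q \<in> vball v m"
  proof
    assume "a * (x1^2 - \<Delta> * x2^2) - t^2 \<in> vball v m"
    then have "P + a * Q \<in> vball v m" using id by simp
    from vball_diff[OF dv this Pm] show "a * Q \<in> vball v m" by simp
  next
    assume "a * Q \<in> vball v m"
    then show "a * (x1^2 - \<Delta> * x2^2) - t^2 \<in> vball v m" using vball_add[OF dv Pm] id by simp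
  qed
  also have "\<dots> \<longleftrightarrow> Q \<in> vball v m" by (rule aQ)
  also have "\<dots> \<longleftrightarrow> h1 \<in> vball v ((m+1) div 2) \<and> x2 \<in> vball v (m div 2)"
    unfolding Q_def by (rule keyQ[OF m0 mK])
  finally show ?thesis by (simp add: h1_def)
qed

lemma keyEmpty: assumes defect: "quad_defect v a = principal_o v 4"
  shows "a * (x1^2 - \<Delta> * x2^2) - t^2 \<notin> vball v (2 * (int T + int e) + 1)"
proof
  define K where "K = int T + int e"
  assume R: "a * (x1^2 - \<Delta> * x2^2) - t^2 \<in> vball v (2 * (int T + int e) + 1)"
  then have "a * (x1^2 - \<Delta> * x2^2) - t^2 \<in> vball v (2 * K)" by (rule vball_mono[rotated]) (simp add: K_def)
  then have H: "x1 - t*u \<in> vball v K" "x2 \<in> vball v K"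
    using keyR[of "2*K"] by (simp_all add: K_def)
  have aB: "a \<in> vball v 0" "\<Delta> \<in> vball v 1" using va vD by (simp_all add: vball_def)
  have "a * (\<Delta> * (x2 * x2)) \<in> vball v (0 + (1 + (K + K)))"
    using vball_mult[OF dv aB(1) vball_mult[OF dv aB(2) vball_mult[OF dv H(2) H(2)]]] .
  then have "a * (\<Delta> * x2^2) \<in> vball v (2 * K + 1)" by (simp add: power2_eq_square algebra_simps)
  from vball_add[OF dv R[folded K_def] this]
  have A: "a * x1^2 - t^2 \<in> vball v (2 * K + 1)" by (simp add: algebra_simps)
  have x1: "x1 \<noteq> 0 \<and> v x1 = int T"
  proof -
    have tunz: "t * u \<noteq> 0" using tnz unz by simp
    have vtu: "v (t * u) = int T" using dv_mult[OF dv tnz unz] vt vu by simp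
    show ?thesis
    proof (cases "x1 - t*u = 0")
      case True then show ?thesis using tunz vtu by simp
    next
      case False
      then have "v (t * u) < v (x1 - t*u)" using H(1) vtu e1 by (simp add: vball_def K_def)
      then show ?thesis using dv_strict[OF dv tunz False] vtu by simp
    qed
  qed
  define b where "b = a - (t / x1)^2"
  have bx: "b * x1^2 = a * x1^2 - t^2" using x1 by (simp add: b_def field_simps)
  have x1sq: "x1^2 \<noteq> 0" "v (x1^2) = 2 * int T" using x1 v_sq by auto
  have bball: "b \<in> vball v (2 * int e + 1)"
    using vball_mult_iff[OF dv x1sq(1), of b "2*K+1"] A bx x1sq(2) by (simp add: K_def)
  have "principal_o v b \<in> {principal_o v b | b. \<exists>y. a - b = y ^ 2}"
  proof -
    have "a - b = (t / x1)^2" by (simp add: b_def)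
    then show ?thesis by blast
  qed
  then have "quad_defect v a \<subseteq> principal_o v b" unfolding quad_defect_def by blast
  moreover have "(4::'k) \<in> principal_o v 4" unfolding principal_o_def by (auto intro: exI[of _ 1] simp: vball_def dv_one[OF dv])
  ultimately have "(4::'k) \<in> principal_o v b" using defect by blast
  then obtain z where z: "z \<in> intring v" "4 = b * z" unfolding principal_o_def by blast
  have f22: "(2::'k) * 2 \<noteq> 0" using two mult_eq_0_iff[of "2::'k" 2] by blast
  have four: "(2::'k) * 2 = 4" by simp
  have fnz: "(4::'k) \<noteq> 0" using f22 four by metis
  have v4: "v (4::'k) = 2 * int e" using dv_mult[OF dv two two] ve four by simp
  have bnz: "b \<noteq> 0" using z(2) fnz by (metis mult_zero_left)
  have znz: "z \<noteq> 0" using z(2) fnz by (metis mult_zero_right)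
  have "v (b * z) = v b + v z" using dv_mult[OF dv bnz znz] .
  then have "v (4::'k) = v b + v z" using z(2) by metis
  moreover have "v b \<ge> 2 * int e + 1" using bball bnz by (simp add: vball_def)
  moreover have "v z \<ge> 0" using z(1) znz by (simp add: vball_def)
  ultimately show False using v4 by simp
qed

end


lemma obtain_u:
  fixes v :: "'k::field \<Rightarrow> int" and a p :: 'k and e :: nat
  assumes dv: "discrete_val v" and ve: "v 2 = int e" and e1: "1 \<le> e" and two: "(2::'k) \<noteq> 0"
    and anz: "a \<noteq> 0" and va: "v a = 0" and pnz: "p \<noteq> 0" and vp: "v p = 1"
    and defect: "quad_defect v a = principal_o v 4"
  shows "\<exists>u. u \<noteq> 0 \<and> v u = 0 \<and> a * u^2 - 1 \<in> vball v (2 * int e)"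
proof -
  have f22: "(2::'k) * 2 \<noteq> 0" using two mult_eq_0_iff[of "2::'k" 2] by blast
  have four: "(2::'k) * 2 = 4" by simp
  have fnz: "(4::'k) \<noteq> 0" using f22 four by metis
  have v4: "v (4::'k) = 2 * int e" using dv_mult[OF dv two two] ve four by simp
  have "\<exists>b y0. a - b = y0^2 \<and> b \<in> vball v (2 * int e)"
  proof (rule ccontr)
    assume N: "\<not> ?thesis"
    define w where "w = p ^ (2 * e - 1)"
    have vw: "v w = 2 * int e - 1" using dv_power[OF dv pnz, of "2*e-1"] vp e1 by (simp add: w_def)
    have "w \<in> quad_defect v a"
      unfolding quad_defect_def
    proof (rule InterI)
      fix X assume "X \<in> {principal_o v b | b. \<exists>y. a - b = y ^ 2}"
      then obtain b y where X: "X = principal_o v b" "a - b = y^2" by blast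
      then have "b \<notin> vball v (2 * int e)" using N by blast
      then have bnz: "b \<noteq> 0" and vb: "v b < 2 * int e" by (auto simp: vball_def)
      have "w \<in> vball v (v b)" using vw vb by (simp add: vball_def)
      then show "w \<in> X" using X principal_o_eq[OF dv bnz] by simp
    qed
    then have "w \<in> vball v (2 * int e)" using defect principal_o_eq[OF dv fnz] v4 by simp
    moreover have "w \<noteq> 0" using pnz by (simp add: w_def)
    ultimately show False using vw by (simp add: vball_def)
  qed
  then obtain b y0 where by0: "a - b = y0^2" "b \<in> vball v (2 * int e)" by blast
  have y0: "y0 \<noteq> 0"
  proof
    assume "y0 = 0"
    then have "a = b" using by0 by simp
    then show False using by0(2) anz va e1 by (simp add: vball_def)
  qed
  have "v (y0^2) = 0"
  proof (cases "b = 0")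
    case True then show ?thesis using by0 va by simp
  next
    case False
    have mb: "- b \<noteq> 0" using False by simp
    have "v (- b) = v b" using dv_uminus[OF dv False] .
    then have "v a < v (- b)" using by0(2) False va e1 by (simp add: vball_def)
    then have "v (a + - b) = v a" using dv_strict[OF dv anz mb] by simp
    then show ?thesis using by0(1) va by simp
  qed
  then have vy0: "v y0 = 0" using dv_power[OF dv y0, of 2] by simp
  define u where "u = inverse y0"
  have unz: "u \<noteq> 0" using y0 by (simp add: u_def)
  have vu: "v u = 0" using dv_inverse[OF dv y0] vy0 by (simp add: u_def)
  have "a * u^2 - 1 = b * u^2" using by0(1) y0
    by (simp add: u_def field_simps power2_eq_square)
  moreover have "u^2 \<in> vball v 0" using unz vu dv_power[OF dv unz, of 2] by (simp add: vball_def)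
  ultimately have "a * u^2 - 1 \<in> vball v (2 * int e + 0)" using vball_mult[OF dv by0(2), of "u^2" 0] by simp
  then show ?thesis using unz vu by auto
qed


theorem proposition6p2:
  fixes v :: "'k::field \<Rightarrow> int" and M :: "('k \<times> 'k) measure"
    and p \<Delta> a t :: 'k and \<beta> :: complex and q e T :: nat
  assumes lf: "nonarch_local_field v"
    and res2: "(2::'k) \<in> vball v 1"
    and two_nz: "(2::'k) \<noteq> 0"
    and q_def: "q = resq v"
    and e_def: "int e = v 2"
    and unif: "p \<noteq> 0" "v p = 1"
    and haar: "haar_o2 v M"
    and Delta: "vabs v \<Delta> = vabs v p"
    and a_unit: "a \<in> intring v" "a \<noteq> 0" "v a = 0"
    and a_defect: "quad_defect v a = principal_o v 4"
    and t: "t \<in> intring v" "t \<noteq> 0" "vabs v t = real q powr (- real T)"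
    and w_ne1: "(of_nat q powr (- \<beta>)) / of_nat q \<noteq> 1"
  shows "summable (\<lambda>l. (of_nat q powr (- \<beta>)) ^ l
              * complex_of_real (Xl v M p (\<lambda>(x1, x2). a * (x1^2 - \<Delta> * x2^2)) (t^2) l))
    \<and> Xser v M p (\<lambda>(x1, x2). a * (x1^2 - \<Delta> * x2^2)) \<beta> (t^2)
      = complex_of_real (vabs v 2)
        * (1 - ((of_nat q powr (- \<beta>)) / of_nat q) ^ (2 * T + e + 1))
        / (1 - (of_nat q powr (- \<beta>)) / of_nat q)"
proof -
  have dv: "discrete_val v" and fin: "finite (residue_field v)"
    using lf by (auto simp: nonarch_local_field_def)
  have ve: "v 2 = int e" using e_def by simp
  have e1: "1 \<le> e" using res2 two_nz ve by (simp add: vball_def)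
  have o0: "(0::'k) \<in> intring v" by simp
  have o1: "(1::'k) \<in> intring v" using dv_one[OF dv] by (simp add: vball_def)
  have q2: "2 \<le> q"
  proof -
    have c: "rrel v `` {0} \<in> residue_field v" "rrel v `` {1} \<in> residue_field v"
      using o0 o1 by (simp_all add: residue_field_eq[OF dv haar] quotientI)
    have "(0::'k, 1) \<notin> rrel v" using dv_m1[OF dv] by (simp add: rrel_def vball_def)
    then have ne: "rrel v `` {0} \<noteq> rrel v `` {1}"
      using eq_equiv_class_iff[OF equiv_rrel[OF dv haar] o0 o1] by simp
    have "card {rrel v `` {0}, rrel v `` {1}} \<le> card (residue_field v)"
      using c fin by (intro card_mono) auto
    then show ?thesis using ne by (simp add: q_def resq_def)
  qed
  have qpos: "(0::real) < real q" "real q \<noteq> 1" using q2 by auto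
  have vabs_nz: "\<And>x. x \<noteq> 0 \<Longrightarrow> vabs v x = real q powr (- real_of_int (v x))"
    by (simp add: vabs_def q_def)
  have vp: "vabs v p = real q powr (- 1)" using vabs_nz[OF unif(1)] unif(2) by simp
  have Dnz: "\<Delta> \<noteq> 0" using Delta vp qpos by (auto simp: vabs_def)
  have vD: "v \<Delta> = 1"
  proof -
    have "real q powr (- real_of_int (v \<Delta>)) = real q powr (- 1)" using Delta vp vabs_nz[OF Dnz] by simp
    then have "- real_of_int (v \<Delta>) = - 1" using powr_inj[OF qpos] by blast
    then show ?thesis by simp
  qed
  have vt: "v t = int T"
  proof -
    have "real q powr (- real_of_int (v t)) = real q powr (- real T)" using t vabs_nz by simp
    then have "- real_of_int (v t) = - real T" using powr_inj[OF qpos] by blast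
    then show ?thesis by simp
  qed
  obtain u where u: "u \<noteq> 0" "v u = 0" "a * u^2 - 1 \<in> vball v (2 * int e)"
    using obtain_u[OF dv ve e1 two_nz a_unit(2,3) unif a_defect] by blast
  have uo: "u \<in> intring v" using u by (simp add: vball_def)
  have tuo: "t * u \<in> intring v" using vball_mult[OF dv t(1) uo] by simp
  note kR = keyR[OF dv ve e1 two_nz a_unit(2,3) Dnz vD t(2) vt u]
  note kE = keyEmpty[OF dv ve e1 two_nz a_unit(2,3) Dnz vD t(2) vt u a_defect]
  have pr: "\<And>l. principal_o v (2 * p^l) = vball v (int e + int l)"
  proof -
    fix l :: nat
    have pl: "p^l \<noteq> 0" using unif by simp
    have "v (2 * p^l) = int e + int l" using dv_mult[OF dv two_nz pl] dv_power[OF dv unif(1), of l] unif ve by simp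
    then show "principal_o v (2 * p^l) = vball v (int e + int l)"
      using principal_o_eq[OF dv, of "2 * p^l"] two_nz pl by simp
  qed
  have Xv: "Xl v M p (\<lambda>(x1, x2). a * (x1^2 - \<Delta> * x2^2)) (t^2) l
      = (if l \<le> 2*T+e then 1 / real q ^ (e + l) else 0)" for l
  proof (cases "l \<le> 2*T+e")
    case True
    define c where "c = (e + l + 1) div 2"
    define f where "f = (e + l) div 2"
    have cf: "c + f = e + l" unfolding c_def f_def by presburger
    have ci: "int c = (int (e + l) + 1) div 2" unfolding c_def by presburger
    have fi: "int f = int (e + l) div 2" unfolding f_def by presburger
    have seteq: "{x \<in> intring v \<times> intring v. (\<lambda>(x1, x2). a * (x1^2 - \<Delta> * x2^2)) x - t^2 \<in> principal_o v (2 * p^l)}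
        = cyl v (t*u) 0 c f"
    proof (intro equalityI subsetI)
      fix x assume "x \<in> {x \<in> intring v \<times> intring v. (\<lambda>(x1, x2). a * (x1^2 - \<Delta> * x2^2)) x - t^2 \<in> principal_o v (2 * p^l)}"
      then obtain x1 x2 where xx: "x = (x1, x2)" "x1 \<in> intring v" "x2 \<in> intring v"
        "a * (x1^2 - \<Delta> * x2^2) - t^2 \<in> vball v (int (e + l))" using pr by (cases x) auto
      then have "x1 - t*u \<in> vball v ((int (e + l) + 1) div 2) \<and> x2 \<in> vball v (int (e + l) div 2)"
        using kR[of "int (e+l)" x1 x2] True by simp
      then show "x \<in> cyl v (t*u) 0 c f" using xx ci fi by (simp add: cyl_def)
    next
      fix x assume x: "x \<in> cyl v (t*u) 0 c f"
      then obtain x1 x2 where xx: "x = (x1, x2)" "x1 \<in> intring v" "x2 \<in> intring v"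
        "x1 - t*u \<in> vball v ((int (e + l) + 1) div 2)" "x2 \<in> vball v (int (e + l) div 2)"
        using ci fi by (cases x) (auto simp: cyl_def)
      then have "a * (x1^2 - \<Delta> * x2^2) - t^2 \<in> vball v (int (e + l))"
        using kR[of "int (e+l)" x1 x2] True by simp
      then show "x \<in> {x \<in> intring v \<times> intring v. (\<lambda>(x1, x2). a * (x1^2 - \<Delta> * x2^2)) x - t^2 \<in> principal_o v (2 * p^l)}"
        using xx pr by simp
    qed
    have "measure M (cyl v (t*u) 0 c f) = measure M (cyl v 0 0 c f)"
      using cyl_shift[OF dv haar tuo o0] .
    moreover have "measure M (cyl v 0 0 c f) * real (resq v) ^ (c + f) = 1"
      using cyl_meas_mult[OF dv haar unif fin] .
    ultimately have "measure M (cyl v (t*u) 0 c f) = 1 / real q ^ (e + l)"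
      using qpos cf q_def by (simp add: field_simps)
    then show ?thesis using seteq True by (simp add: Xl_def)
  next
    case False
    have seteq: "{x \<in> intring v \<times> intring v. (\<lambda>(x1, x2). a * (x1^2 - \<Delta> * x2^2)) x - t^2 \<in> principal_o v (2 * p^l)} = {}"
    proof (rule ccontr)
      assume "\<not> ?thesis"
      then obtain x1 x2 where "a * (x1^2 - \<Delta> * x2^2) - t^2 \<in> vball v (int e + int l)"
        using pr by auto
      moreover have "2 * (int T + int e) + 1 \<le> int e + int l" using False by simp
      ultimately have "a * (x1^2 - \<Delta> * x2^2) - t^2 \<in> vball v (2 * (int T + int e) + 1)"
        using vball_mono by blast
      then show False using kE by blast
    qed
    show ?thesis using False unfolding Xl_def seteq by simp
  qed
  define z where "z = (of_nat q powr (- \<beta>) :: complex)"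
  define w where "w = z / of_nat q"
  define N where "N = 2*T+e"
  have qc: "(of_nat q :: complex) \<noteq> 0" using q2 by simp
  have trm: "z ^ l * complex_of_real (Xl v M p (\<lambda>(x1, x2). a * (x1^2 - \<Delta> * x2^2)) (t^2) l)
      = (if l < Suc N then (1 / of_nat q ^ e) * w ^ l else 0)" for l
  proof (cases "l \<le> N")
    case True
    have "z ^ l * complex_of_real (1 / real q ^ (e + l)) = z ^ l / of_nat q ^ (e + l)"
      by simp
    also have "\<dots> = (1 / of_nat q ^ e) * w ^ l" using qc
      by (simp add: w_def power_add power_divide field_simps)
    finally show ?thesis using True Xv[of l] by (simp add: N_def)
  next
    case False then show ?thesis using Xv[of l] by (simp add: N_def)
  qed
  have sm: "(\<lambda>l. z ^ l * complex_of_real (Xl v M p (\<lambda>(x1, x2). a * (x1^2 - \<Delta> * x2^2)) (t^2) l))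
      sums (\<Sum>l\<in>{..<Suc N}. (1 / of_nat q ^ e) * w ^ l)"
  proof -
    have "(\<lambda>l. if l < Suc N then (1 / of_nat q ^ e) * w ^ l else 0) sums
        (\<Sum>l\<in>{..<Suc N}. (if l < Suc N then (1 / of_nat q ^ e) * w ^ l else 0))"
      by (rule sums_finite) auto
    then show ?thesis unfolding trm by simp
  qed
  have sumv: "(\<Sum>l\<in>{..<Suc N}. (1 / of_nat q ^ e) * w ^ l) = (1 / of_nat q ^ e) * ((1 - w ^ Suc N) / (1 - w))"
  proof -
    have w1: "w \<noteq> 1" using w_ne1 by (simp add: w_def z_def)
    have "(\<Sum>l\<in>{..<Suc N}. (1 / of_nat q ^ e) * w ^ l) = (1 / of_nat q ^ e) * (\<Sum>l\<in>{..<Suc N}. w ^ l)"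
      by (rule sum_distrib_left[symmetric])
    also have "(\<Sum>l\<in>{..<Suc N}. w ^ l) = (1 - w ^ Suc N) / (1 - w)"
      using sum_gp_strict[of w "Suc N"] w1 by simp
    finally show ?thesis .
  qed
  have v2: "vabs v 2 = 1 / real q ^ e"
    using vabs_nz[OF two_nz] ve qpos by (simp add: powr_minus powr_realpow divide_inverse)
  have "Xser v M p (\<lambda>(x1, x2). a * (x1^2 - \<Delta> * x2^2)) \<beta> (t^2)
     = (\<Sum>l. z ^ l * complex_of_real (Xl v M p (\<lambda>(x1, x2). a * (x1^2 - \<Delta> * x2^2)) (t^2) l))"
    by (simp add: Xser_def z_def q_def)
  also have "\<dots> = (1 / of_nat q ^ e) * ((1 - w ^ Suc N) / (1 - w))"
    using sums_unique[OF sm] sumv by simp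
  finally have X: "Xser v M p (\<lambda>(x1, x2). a * (x1^2 - \<Delta> * x2^2)) \<beta> (t^2)
     = (1 / of_nat q ^ e) * ((1 - w ^ Suc N) / (1 - w))" .
  show ?thesis
  proof
    show "summable (\<lambda>l. (of_nat q powr (- \<beta>)) ^ l
              * complex_of_real (Xl v M p (\<lambda>(x1, x2). a * (x1^2 - \<Delta> * x2^2)) (t^2) l))"
      using sums_summable[OF sm] by (simp add: z_def)
    show "Xser v M p (\<lambda>(x1, x2). a * (x1^2 - \<Delta> * x2^2)) \<beta> (t^2)
      = complex_of_real (vabs v 2)
        * (1 - ((of_nat q powr (- \<beta>)) / of_nat q) ^ (2 * T + e + 1))
        / (1 - (of_nat q powr (- \<beta>)) / of_nat q)"
      unfolding X v2 by (simp add: w_def z_def N_def)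
  qed
qed

end
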